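(* Let $q=2^m$ with $m\ge 4$ even. Then the incidence structure $(U_{q+1},\mathcal B_4(\mathcal C_{\{3,5\}}^\perp|_{\mathrm{GF}(q)}))$ formed by the supports of the minimum-weight codewords of $\mathcal C_{\{3,5\}}^\perp|_{\mathrm{GF}(q)}$ is a $3$-$(q+1,4,2)$ design.
   Context: $U_{q+1}$ is the set of $(q+1)$-th roots of unity in $\mathrm{GF}(q^2)$; coordinates are indexed by $U_{q+1}$. $\mathcal C_{\{3,5\}}=\{(a_3u^3+a_{q-2}u^{q-2}+a_5u^5+a_{q-4}u^{q-4})_{u\in U_{q+1}}: a_i\in\mathrm{GF}(q^2)\}$, $\mathcal C_{\{3,5\}}^\perp$ its dual under the standard inner product, $\mathcal C^\perp_{\{3,5\}}|_{\mathrm{GF}(q)}=\mathcal C^\perp_{\{3,5\}}\cap\mathrm{GF}(q)^{q+1}$ (its minimum distance is $4$). $\mathcal B_4(\mathcal C)$ is the set of supports of weight-$4$ codewords. A $t$-$(v,k,\lambda)$ design: $v$ points, blocks of size $k$, every $t$ points in exactly $\lambda$ blocks. *)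

theory Defs
  imports Main
begin

text \<open>The field GF(q^2) is modelled as a finite field type 'a with CARD('a) = q^2.
  Vectors indexed by U_{q+1} are functions 'a => 'a vanishing outside U_{q+1}.\<close>

definition roots_unity :: "nat \<Rightarrow> 'a::field set" where
  "roots_unity q = {u. u ^ (q + 1) = 1}"

definition is_vector :: "nat \<Rightarrow> ('a::field \<Rightarrow> 'a) \<Rightarrow> bool" where
  "is_vector q c \<longleftrightarrow> (\<forall>u. u \<notin> roots_unity q \<longrightarrow> c u = 0)"

definition code_C35 :: "nat \<Rightarrow> ('a::field \<Rightarrow> 'a) set" where
  "code_C35 q = {c. \<exists>a3 aq2 a5 aq4. \<forall>u. c u =
      (if u \<in> roots_unity q
       then a3 * u ^ 3 + aq2 * u ^ (q - 2) + a5 * u ^ 5 + aq4 * u ^ (q - 4)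
       else 0)}"

definition dual_code :: "nat \<Rightarrow> ('a::field \<Rightarrow> 'a) set \<Rightarrow> ('a \<Rightarrow> 'a) set" where
  "dual_code q C = {c. is_vector q c \<and>
      (\<forall>x\<in>C. (\<Sum>u\<in>roots_unity q. c u * x u) = 0)}"

definition subfield_subcode :: "nat \<Rightarrow> ('a::field \<Rightarrow> 'a) set \<Rightarrow> ('a \<Rightarrow> 'a) set" where
  "subfield_subcode q C = {c \<in> C. \<forall>u\<in>roots_unity q. c u ^ q = c u}"

definition supp_vec :: "nat \<Rightarrow> ('a::field \<Rightarrow> 'a) \<Rightarrow> 'a set" where
  "supp_vec q c = {u \<in> roots_unity q. c u \<noteq> 0}"

definition blocks_w :: "nat \<Rightarrow> nat \<Rightarrow> ('a::field \<Rightarrow> 'a) set \<Rightarrow> 'a set set" where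
  "blocks_w q w C = {supp_vec q c | c. c \<in> C \<and> card (supp_vec q c) = w}"

definition is_design :: "nat \<Rightarrow> nat \<Rightarrow> nat \<Rightarrow> nat \<Rightarrow> 'p set \<Rightarrow> 'p set set \<Rightarrow> bool" where
  "is_design t v k lam P B \<longleftrightarrow> finite P \<and> card P = v \<and>
     (\<forall>b\<in>B. b \<subseteq> P \<and> card b = k) \<and>
     (\<forall>T. T \<subseteq> P \<longrightarrow> card T = t \<longrightarrow> card {b\<in>B. T \<subseteq> b} = lam)"

end

theory Submission
  imports Defs "HOL-Computational_Algebra.Polynomial"
begin


lemma char2_of_card:
  assumes "card (UNIV::'a set) = 2 ^ n" "n \<ge> 1"
  shows "(2::'a::{field,finite}) = 0"
proof -
  have b: "bij_betw (\<lambda>y::'a. 1 + y) UNIV UNIV"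
    by (rule bij_betw_byWitness[where f'="\<lambda>y. y - 1"]) auto
  have "(\<Sum>y\<in>UNIV. (1::'a) + y) = (\<Sum>y\<in>UNIV. y)"
    using sum.reindex_bij_betw[OF b, of "\<lambda>y. y"] by simp
  hence "of_nat (card (UNIV::'a set)) = (0::'a)" by (simp add: sum.distrib)
  hence "(2::'a) ^ n = 0" using assms(1) by simp
  thus ?thesis by simp
qed

lemma fermat_field:
  fixes x :: "'a::{field,finite}"
  assumes "x \<noteq> 0"
  shows "x ^ (card (UNIV::'a set) - 1) = 1"
proof -
  let ?S = "UNIV - {0::'a}"
  have b: "bij_betw (\<lambda>y. x * y) ?S ?S"
    by (rule bij_betw_byWitness[where f'="\<lambda>y. y / x"]) (use assms in auto)
  have "(\<Prod>y\<in>?S. x * y) = (\<Prod>y\<in>?S. y)"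
    using prod.reindex_bij_betw[OF b, of "\<lambda>y. y"] by simp
  hence "x ^ card ?S * (\<Prod>y\<in>?S. y) = (\<Prod>y\<in>?S. y)"
    by (simp add: prod.distrib)
  moreover have "(\<Prod>y\<in>?S. y) \<noteq> 0" by simp
  ultimately have "x ^ card ?S = 1" by simp
  moreover have "card ?S = card (UNIV::'a set) - 1" by (simp add: card_Diff_singleton)
  ultimately show ?thesis by simp
qed

lemma frob2:
  fixes x y :: "'a::field"
  assumes "(2::'a) = 0"
  shows "(x + y) ^ (2 ^ k) = x ^ (2 ^ k) + y ^ (2 ^ k)"
proof (induction k)
  case 0 then show ?case by simp
next
  case (Suc k)
  have sq: "(a + b) ^ 2 = a ^ 2 + b ^ 2" for a b :: 'a
  proof -
    have "(a + b) ^ 2 = a ^ 2 + b ^ 2 + 2 * a * b" by (simp add: power2_eq_square algebra_simps)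
    thus ?thesis using assms by simp
  qed
  have "(x + y) ^ (2 ^ Suc k) = ((x + y) ^ (2 ^ k)) ^ 2" by (simp add: power_mult[symmetric] mult.commute)
  also have "\<dots> = (x ^ (2 ^ k)) ^ 2 + (y ^ (2 ^ k)) ^ 2" using Suc sq by simp
  also have "\<dots> = x ^ (2 ^ Suc k) + y ^ (2 ^ Suc k)" by (simp add: power_mult[symmetric] mult.commute)
  finally show ?case .
qed

lemma char2_neg: "(2::'a::field) = 0 \<Longrightarrow> - (x::'a) = x"
  by (metis add_eq_0_iff mult_2 mult_zero_left)

lemma root_bound:
  fixes c :: "'a::field"
  assumes "n \<ge> 1"
  shows "card {x::'a. x ^ n = c} \<le> n"
proof -
  let ?p = "monom 1 n - [:c:]"
  have dp: "degree ?p = n"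
  proof -
    have "monom 1 n - [:c:] = monom 1 n + (- [:c:])" by simp
    also have "degree \<dots> = degree (monom (1::'a) n)"
      by (rule degree_add_eq_left) (use assms in \<open>simp add: degree_monom_eq\<close>)
    finally show ?thesis by (simp add: degree_monom_eq)
  qed
  have "?p \<noteq> 0" using dp assms by auto
  hence "card {x. poly ?p x = 0} \<le> degree ?p" by (rule card_poly_roots_bound)
  moreover have "{x. poly ?p x = 0} = {x::'a. x ^ n = c}" by (auto simp: poly_monom)
  ultimately show ?thesis using dp by simp
qed



definition s22 :: "'a::field \<Rightarrow> 'a \<Rightarrow> 'a \<Rightarrow> 'a \<Rightarrow> 'a" where
  "s22 a b c x = (a*b + a*c + a*x + b*c + b*x + c*x)^2 - (a + b + c + x) * (a*b*c + a*b*x + a*c*x + b*c*x)"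
definition h2 :: "'a::field \<Rightarrow> 'a \<Rightarrow> 'a \<Rightarrow> 'a" where
  "h2 a b c = a*a + b*b + c*c + a*b + b*c + c*a"
definition Lf :: "'a::field \<Rightarrow> 'a \<Rightarrow> 'a \<Rightarrow> 'a \<Rightarrow> 'a" where
  "Lf om a b c = a + om*b + om^2*c"
definition Nf :: "'a::field \<Rightarrow> 'a \<Rightarrow> 'a \<Rightarrow> 'a \<Rightarrow> 'a" where
  "Nf om a b c = b*c + om*a*c + om^2*a*b"
definition V3 :: "'a::field \<Rightarrow> 'a \<Rightarrow> 'a \<Rightarrow> 'a" where
  "V3 a b c = (b - a) * (c - a) * (c - b)"
definition V4 :: "'a::field \<Rightarrow> 'a \<Rightarrow> 'a \<Rightarrow> 'a \<Rightarrow> 'a" where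
  "V4 a b c x = (b - a) * (c - a) * (x - a) * (c - b) * (x - b) * (x - c)"

lemmas defs_all = s22_def h2_def Lf_def Nf_def V3_def V4_def

lemma elim4:
  fixes a b c x da db dc dx :: "'a::field"
  assumes "da + db + dc + dx = 0"
    "da*a + db*b + dc*c + dx*x = 0"
    "da*a^4 + db*b^4 + dc*c^4 + dx*x^4 = 0"
    "da*a^5 + db*b^5 + dc*c^5 + dx*x^5 = 0"
  shows "dx * (V4 a b c x * s22 a b c x) = 0"
proof -
  have "(-a * b^4 * c^5 + a * b^5 * c^4 + a^4 * b * c^5 - a^4 * b^5 * c - a^5 * b * c^4 + a^5 * b^4 * c) * (da + db + dc + dx)
     + (a^4 * b^5 - a^4 * c^5 - a^5 * b^4 + a^5 * c^4 + b^4 * c^5 - b^5 * c^4) * (da*a + db*b + dc*c + dx*x)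
     + (-a * b^5 + a * c^5 + a^5 * b - a^5 * c - b * c^5 + b^5 * c) * (da*a^4 + db*b^4 + dc*c^4 + dx*x^4)
     + (a * b^4 - a * c^4 - a^4 * b + a^4 * c + b * c^4 - b^4 * c) * (da*a^5 + db*b^5 + dc*c^5 + dx*x^5)
     = dx * (V4 a b c x * s22 a b c x)" unfolding defs_all by algebra
  thus ?thesis using assms by simp
qed

lemma elim3:
  fixes a b c da db dc :: "'a::field"
  assumes "da + db + dc = 0"
    "da*a + db*b + dc*c = 0"
    "da*a^4 + db*b^4 + dc*c^4 = 0"
  shows "da * (V3 a b c * h2 a b c) = 0"
proof -
  have "(b * c^4 - b^4 * c) * (da + db + dc) + (b^4 - c^4) * (da*a + db*b + dc*c)
     + (c - b) * (da*a^4 + db*b^4 + dc*c^4) = da * (V3 a b c * h2 a b c)"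
    unfolding defs_all by algebra
  thus ?thesis using assms by simp
qed

lemma cofvec:
  fixes a b c x :: "'a::field"
  defines "da \<equiv> V3 b c x * h2 b c x" and "db \<equiv> - (V3 a c x * h2 a c x)"
    and "dc \<equiv> V3 a b x * h2 a b x" and "dx \<equiv> - (V3 a b c * h2 a b c)"
  shows "da + db + dc + dx = 0"
    "da*a + db*b + dc*c + dx*x = 0"
    "da*a^4 + db*b^4 + dc*c^4 + dx*x^4 = 0"
    "da*a^5 + db*b^5 + dc*c^5 + dx*x^5 = - (V4 a b c x * s22 a b c x)"
  unfolding assms defs_all by algebra+

lemma om_s22:
  fixes a b c x om :: "'a::field"
  assumes "(2::'a) = 0" "om^2 + om + 1 = 0"
  shows "s22 a b c x = (Lf om a b c * x + Nf om a b c) * (Lf (om^2) a b c * x + Nf (om^2) a b c)"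
proof -
  have "s22 a b c x - (Lf om a b c * x + Nf om a b c) * (Lf (om^2) a b c * x + Nf (om^2) a b c) = 2 * (-2 * a * b * c * x + a * b * c^2 + a * b * x^2 + a * b^2 * c + a * b^2 * x + a * c * x^2 + a * c^2 * x + a^2 * b * c + a^2 * b * x + a^2 * c * x + b * c * x^2 + b * c^2 * x + b^2 * c * x) + (om^2 + om + 1) * (-4 * a * b * c * om * x + 2 * a * b * c * om^3 * x - 2 * a * b * c * om^4 * x + 4 * a * b * c * x - a * b * c^2 - a * b * x^2 - a * b^2 * c + a * b^2 * c * om - a * b^2 * c * om^2 + a * b^2 * om * x - a * b^2 * om^3 * x - a * b^2 * x + a * c * om * x^2 - a * c * om^2 * x^2 - a * c * x^2 + a * c^2 * om * x - a * c^2 * om^3 * x - a * c^2 * x - a^2 * b * c + a^2 * b * c * om - a^2 * b * c * om^3 + a^2 * b * om * x - a^2 * b * om^2 * x - a^2 * b * x + a^2 * b^2 - a^2 * b^2 * om + a^2 * b^2 * om^3 - a^2 * b^2 * om^4 - a^2 * c * x + a^2 * c^2 - a^2 * c^2 * om + b * c * om * x^2 - b * c * om^3 * x^2 - b * c * x^2 + b * c^2 * om * x - b * c^2 * om^2 * x - b * c^2 * x - b^2 * c * x - b^2 * om * x^2 + b^2 * x^2 - c^2 * om * x^2 + c^2 * om^3 * x^2 - c^2 * om^4 * x^2 + c^2 * x^2)" unfolding defs_all by algebra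
  thus ?thesis using assms by simp
qed

lemma om_h2:
  fixes a b c x om :: "'a::field"
  assumes "(2::'a) = 0" "om^2 + om + 1 = 0"
  shows "h2 a b c = Lf om a b c * Lf (om^2) a b c"
proof -
  have "h2 a b c - Lf om a b c * Lf (om^2) a b c = 2 * (a * b + a * c + b * c) + (om^2 + om + 1) * (-a * b - a * c + a * c * om - a * c * om^2 - b * c + b * c * om - b * c * om^3 + b^2 - b^2 * om + c^2 - c^2 * om + c^2 * om^3 - c^2 * om^4)" unfolding defs_all by algebra
  thus ?thesis using assms by simp
qed

lemma om_L0:
  fixes a b c x om :: "'a::field"
  assumes "(2::'a) = 0" "om^2 + om + 1 = 0"
  shows "(b-c)^2 = Lf om a b c * (om*c+om^2*b) - Nf om a b c"
proof -
  have "(b-c)^2 - (Lf om a b c * (om*c+om^2*b) - Nf om a b c) = 2 * 0 + (om^2 + om + 1) * (-b * c + b * c * om - b * c * om^2 + b^2 - b^2 * om + c^2 - c^2 * om)" unfolding defs_all by algebra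
  thus ?thesis using assms by simp
qed

lemma om_xa:
  fixes a b c x om :: "'a::field"
  assumes "(2::'a) = 0" "om^2 + om + 1 = 0"
  shows "Nf om a b c - Lf om a b c * a = (a-b)*(a-c)"
proof -
  have "Nf om a b c - Lf om a b c * a - (a-b)*(a-c) = 2 * (-a * b * om + a * c + a * c * om - a^2) + (om^2 + om + 1) * (a * b - a * c)" unfolding defs_all by algebra
  thus ?thesis using assms by simp
qed

lemma om_xb:
  fixes a b c x om :: "'a::field"
  assumes "(2::'a) = 0" "om^2 + om + 1 = 0"
  shows "Nf om a b c - Lf om a b c * b = om*(b-a)*(b-c)"
proof -
  have "Nf om a b c - Lf om a b c * b - om*(b-a)*(b-c) = 2 * (-a * b + b * c + b * c * om - b^2 * om) + (om^2 + om + 1) * (a * b - b * c)" unfolding defs_all by algebra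
  thus ?thesis using assms by simp
qed

lemma om_xc:
  fixes a b c x om :: "'a::field"
  assumes "(2::'a) = 0" "om^2 + om + 1 = 0"
  shows "Nf om a b c - Lf om a b c * c = om^2*(c-a)*(c-b)"
proof -
  have "Nf om a b c - Lf om a b c * c - om^2*(c-a)*(c-b) = 2 * (-a * c - b * c * om + c^2 + c^2 * om) + (om^2 + om + 1) * (a * c + b * c - 2 * c^2)" unfolding defs_all by algebra
  thus ?thesis using assms by simp
qed

lemma om_x12:
  fixes a b c x om :: "'a::field"
  assumes "(2::'a) = 0" "om^2 + om + 1 = 0"
  shows "Nf om a b c * Lf (om^2) a b c - Nf (om^2) a b c * Lf om a b c = (a-b)*(b-c)*(c-a)"
proof -
  have "Nf om a b c * Lf (om^2) a b c - Nf (om^2) a b c * Lf om a b c - (a-b)*(b-c)*(c-a) = 2 * (a * b^2 * om - a * c^2 * om - a^2 * b * om + a^2 * c * om + b * c^2 * om - b^2 * c * om) + (om^2 + om + 1) * (-a * b^2 - a * b^2 * om + 2 * a * b^2 * om^2 - a * b^2 * om^3 + a * c^2 + a * c^2 * om - 2 * a * c^2 * om^2 + a * c^2 * om^3 + a^2 * b + a^2 * b * om - a^2 * b * om^2 - a^2 * c - b * c^2 - b * c^2 * om + b * c^2 * om^2 + b^2 * c)" unfolding defs_all by algebra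
  thus ?thesis using assms by simp
qed


context
  fixes m q :: nat
  assumes m4: "m \<ge> 4" and mev: "even m" and qdef: "q = 2 ^ m"
    and cardF: "card (UNIV :: 'a::{field,finite} set) = q ^ 2"
begin

lemma q4: "q \<ge> 16"
proof -
  have "(2::nat) ^ 4 \<le> 2 ^ m" using m4 by (rule power_increasing) simp
  thus ?thesis using qdef by simp
qed

lemma char2: "(2::'a) = 0"
  using char2_of_card[of "2*m"] cardF qdef m4 by (simp add: power_mult[symmetric] mult.commute)

lemma neg_eq: "- (x::'a) = x"
  using char2 by (rule char2_neg)

lemma minus_eq_plus: "(x::'a) - y = x + y"
  using neg_eq[of y] by (metis diff_conv_add_uminus)

lemma fermat: "(x::'a) \<noteq> 0 \<Longrightarrow> x ^ (q^2 - 1) = 1"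
  using fermat_field[of x] cardF by simp

lemma frob_add: "((x::'a) + y) ^ q = x ^ q + y ^ q"
  using frob2[OF char2] qdef by simp

lemma frob_diff: "((x::'a) - y) ^ q = x ^ q - y ^ q"
  using frob_add by (simp add: minus_eq_plus)

lemma sq_inj: "((x::'a) ^ 2 = y ^ 2) \<longleftrightarrow> x = y"
proof
  assume "x ^ 2 = y ^ 2"
  have "(x + y) ^ 2 = x ^ 2 + y ^ 2" using frob2[OF char2, of x y 1] by simp
  also have "\<dots> = y ^ 2 + y ^ 2" using \<open>x ^ 2 = y ^ 2\<close> by simp
  also have "\<dots> = 2 * y ^ 2" by (rule mult_2[symmetric])
  finally have "(x + y) ^ 2 = 0" using char2 by simp
  hence "x + y = 0" by simp
  hence "x = - y" by (simp add: eq_neg_iff_add_eq_0)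
  thus "x = y" using neg_eq[of y] by simp
qed simp

lemma sq_surj: "\<exists>r::'a. r ^ 2 = x"
proof -
  have "inj (\<lambda>r::'a. r ^ 2)" using sq_inj by (auto intro: injI)
  hence "surj (\<lambda>r::'a. r ^ 2)" by (meson finite_UNIV_inj_surj finite)
  thus ?thesis by (metis surjD)
qed

abbreviation "U \<equiv> (roots_unity q :: 'a set)"

lemma U_iff: "(u::'a) \<in> U \<longleftrightarrow> u ^ (q+1) = 1"
  by (simp add: roots_unity_def)

lemma U_nz: "(u::'a) \<in> U \<Longrightarrow> u \<noteq> 0"
  by (auto simp: U_iff)

lemma U_conj: "(u::'a) \<in> U \<Longrightarrow> u ^ q = inverse u"
  by (metis U_iff U_nz inverse_unique power_Suc2 Suc_eq_plus1 mult.commute)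

lemma U_sq: "((u::'a) ^ 2 \<in> U) \<longleftrightarrow> u \<in> U"
proof -
  have "(u ^ 2) ^ (q+1) = (u ^ (q+1)) ^ 2" by (metis power_mult mult.commute)
  thus ?thesis unfolding U_iff using sq_inj[of "u^(q+1)" 1] by simp
qed

lemma U_finite: "finite U" by simp

lemma U_card: "card U = q + 1"
proof (rule antisym)
  show "card U \<le> q + 1" unfolding roots_unity_def by (rule root_bound) simp
next
  let ?S = "UNIV - {0::'a}"
  let ?f = "\<lambda>z::'a. z ^ (q - 1)"
  have q1: "q \<ge> 1" using q4 by simp
  have img: "?f ` ?S \<subseteq> U"
  proof
    fix y assume "y \<in> ?f ` ?S"
    then obtain z where z: "z \<noteq> 0" "y = z ^ (q - 1)" by auto
    have "(q - 1) * (q + 1) = q^2 - 1" by (simp add: power2_eq_square algebra_simps)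
    hence "y ^ (q+1) = z ^ (q^2 - 1)" using z by (metis power_mult)
    thus "y \<in> U" using fermat[OF z(1)] by (simp add: U_iff)
  qed
  have eq: "?S = (\<Union>y\<in>?f ` ?S. {z \<in> ?S. ?f z = y})" by auto
  have "card ?S = card (\<Union>y\<in>?f ` ?S. {z \<in> ?S. ?f z = y})" using arg_cong[OF eq, of card] .
  also have "\<dots> \<le> (\<Sum>y\<in>?f ` ?S. card {z \<in> ?S. ?f z = y})"
    by (rule card_UN_le) simp
  also have "\<dots> \<le> (\<Sum>y\<in>?f ` ?S. (q - 1))"
  proof (rule sum_mono)
    fix y
    have "card {z \<in> ?S. ?f z = y} \<le> card {z::'a. z ^ (q-1) = y}" by (rule card_mono) auto
    also have "\<dots> \<le> q - 1" by (rule root_bound) (use q4 in simp)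
    finally show "card {z \<in> ?S. ?f z = y} \<le> q - 1" .
  qed
  also have "\<dots> = card (?f ` ?S) * (q - 1)" by simp
  also have "\<dots> \<le> card U * (q - 1)" using img by (simp add: card_mono)
  finally have "card ?S \<le> card U * (q - 1)" .
  moreover have "card ?S = q^2 - 1" using cardF by (simp add: card_Diff_singleton)
  moreover have "q^2 - 1 = (q + 1) * (q - 1)" by (simp add: power2_eq_square algebra_simps)
  ultimately have "(q+1) * (q-1) \<le> card U * (q-1)" by simp
  moreover have "0 < q - 1" using q4 by simp
  ultimately show "q + 1 \<le> card U" by (metis mult_le_cancel2)
qed

lemma pow_mod3: "(w::'a) ^ 3 = 1 \<Longrightarrow> w ^ n = w ^ (n mod 3)"
proof -
  assume w: "w ^ 3 = 1"
  have "w ^ n = w ^ (3 * (n div 3) + n mod 3)" by simp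
  also have "\<dots> = (w^3) ^ (n div 3) * w ^ (n mod 3)" by (simp only: power_add power_mult)
  finally show ?thesis using w by simp
qed

lemma q_mod3: "q mod 3 = 1"
proof -
  obtain j where "m = 2 * j" using mev by auto
  hence "q = 4 ^ j" using qdef by (simp add: power_mult)
  moreover have "(4::nat) ^ j mod 3 = ((4 mod 3) ^ j) mod 3" by (rule power_mod[symmetric])
  ultimately show ?thesis by simp
qed

lemma omega_exists: "\<exists>om::'a. om^2 + om + 1 = 0 \<and> om ^ q = om"
proof -
  define k where "k = q^2 div 3"
  have "q^2 mod 3 = ((q mod 3)^2) mod 3" by (rule power_mod[symmetric])
  hence qq: "q^2 mod 3 = 1" using q_mod3 by simp
  have "q^2 div 3 * 3 + q^2 mod 3 = q^2" by (rule div_mult_mod_eq)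
  hence k3: "3 * k = q^2 - 1" unfolding k_def using qq by linarith
  have "q * q \<ge> 16 * 16" using q4 by (meson mult_le_mono)
  hence "k \<ge> 1" using k3 by (simp add: power2_eq_square)
  hence cb: "card {z::'a. z ^ k = 1} \<le> k" by (rule root_bound)
  have "card (UNIV - {0::'a}) = q^2 - 1" using cardF by (simp add: card_Diff_singleton)
  have "\<not> (UNIV - {0::'a}) \<subseteq> {z. z ^ k = 1}"
  proof
    assume "(UNIV - {0::'a}) \<subseteq> {z. z ^ k = 1}"
    hence "card (UNIV - {0::'a}) \<le> card {z::'a. z ^ k = 1}" by (rule card_mono[rotated]) simp
    hence "q^2 - 1 \<le> k" using cb cardF by (simp add: card_Diff_singleton)
    thus False using k3 \<open>k \<ge> 1\<close> by simp
  qed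
  then obtain z :: 'a where z: "z \<noteq> 0" "z ^ k \<noteq> 1" by auto
  define om where "om = z ^ k"
  have o3: "om ^ 3 = 1" unfolding om_def using fermat[OF z(1)] k3 by (simp add: power_mult[symmetric] mult.commute)
  have "(om - 1) * (om^2 + om + 1) = om^3 - 1" by (simp add: algebra_simps power2_eq_square power3_eq_cube)
  hence "om^2 + om + 1 = 0" using o3 z(2) om_def by simp
  moreover have "om ^ q = om" using pow_mod3[OF o3, of q] q_mod3 by simp
  ultimately show ?thesis by blast
qed


lemma cube_of: "(t::'a)^2 + t + 1 = 0 \<Longrightarrow> t^3 = 1"
proof -
  assume h: "t^2 + t + 1 = 0"
  have "t^3 - 1 = (t - 1) * (t^2 + t + 1)" by (simp add: algebra_simps power2_eq_square power3_eq_cube)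
  thus ?thesis using h by simp
qed

lemma om2_props:
  assumes "(t::'a)^2 + t + 1 = 0" "t^q = t"
  shows "(t^2)^2 + t^2 + 1 = 0" "(t^2)^q = t^2" "t \<noteq> 0"
proof -
  have "(t^2)^2 = t^3 * t" by (simp add: power2_eq_square power3_eq_cube mult.assoc)
  thus "(t^2)^2 + t^2 + 1 = 0" using cube_of[OF assms(1)] assms(1) by (simp add: algebra_simps)
  show "(t^2)^q = t^2" using assms(2) by (metis power_mult mult.commute)
  show "t \<noteq> 0" using assms(1) by auto
qed

lemma conjL:
  assumes "(t::'a)^q = t" "a \<in> U" "b \<in> U" "c \<in> U"
  shows "(Lf t a b c)^q = Nf t a b c / (a*b*c)"
proof -
  have oq2: "(t^2)^q = t^2" using assms(1) by (metis power_mult mult.commute)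
  have "(Lf t a b c)^q = a^q + (t*b)^q + (t^2*c)^q" unfolding Lf_def by (simp add: frob_add)
  also have "\<dots> = inverse a + t * inverse b + t^2 * inverse c"
    using assms oq2 by (simp add: power_mult_distrib U_conj)
  also have "\<dots> = Nf t a b c / (a*b*c)"
    using U_nz[OF assms(2)] U_nz[OF assms(3)] U_nz[OF assms(4)]
    unfolding Nf_def by (simp add: field_simps)
  finally show ?thesis .
qed

lemma conjN:
  assumes "(t::'a)^q = t" "a \<in> U" "b \<in> U" "c \<in> U"
  shows "(Nf t a b c)^q = Lf t a b c / (a*b*c)"
proof -
  have oq2: "(t^2)^q = t^2" using assms(1) by (metis power_mult mult.commute)
  have "(Nf t a b c)^q = (b*c)^q + (t*a*c)^q + (t^2*a*b)^q" unfolding Nf_def by (simp add: frob_add)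
  also have "\<dots> = inverse b * inverse c + t * inverse a * inverse c + t^2 * inverse a * inverse b"
    using assms oq2 by (simp add: power_mult_distrib U_conj)
  also have "\<dots> = Lf t a b c / (a*b*c)"
    using U_nz[OF assms(2)] U_nz[OF assms(3)] U_nz[OF assms(4)]
    unfolding Lf_def by (simp add: field_simps)
  finally show ?thesis .
qed

lemma L_nz:
  assumes "(t::'a)^2 + t + 1 = 0" "t^q = t" "a \<in> U" "b \<in> U" "c \<in> U" "b \<noteq> c"
  shows "Lf t a b c \<noteq> 0" "Nf t a b c \<noteq> 0"
proof -
  have abc: "a*b*c \<noteq> 0" using U_nz assms by simp
  have q0: "q \<noteq> 0" using q4 by simp
  show L: "Lf t a b c \<noteq> 0"
  proof
    assume L0: "Lf t a b c = 0"
    hence "(Lf t a b c)^q = 0" using q0 by simp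
    hence N0: "Nf t a b c = 0" using conjL[OF assms(2-5)] abc by simp
    have "(b-c)^2 = Lf t a b c * (t*c+t^2*b) - Nf t a b c" by (rule om_L0[OF char2 assms(1)])
    hence "(b-c)^2 = 0" using L0 N0 by simp
    thus False using assms(6) by simp
  qed
  have "(Lf t a b c)^q \<noteq> 0" using L by simp
  thus "Nf t a b c \<noteq> 0" using conjL[OF assms(2-5)] by auto
qed

lemma root_U:
  assumes "(t::'a)^2 + t + 1 = 0" "t^q = t" "a \<in> U" "b \<in> U" "c \<in> U" "b \<noteq> c"
  shows "Nf t a b c / Lf t a b c \<in> U"
proof -
  have abc: "a*b*c \<noteq> 0" using U_nz assms by simp
  note nz = L_nz[OF assms]
  have "(Nf t a b c / Lf t a b c)^q = Lf t a b c / Nf t a b c"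
    using conjL[OF assms(2-5)] conjN[OF assms(2-5)] abc nz by (simp add: power_divide)
  hence "(Nf t a b c / Lf t a b c)^(q+1) = (Lf t a b c / Nf t a b c) * (Nf t a b c / Lf t a b c)"
    by simp
  also have "\<dots> = 1" using nz by simp
  finally show ?thesis by (simp add: U_iff)
qed

lemma h2_nz:
  assumes "a \<in> U" "b \<in> U" "c \<in> U" "b \<noteq> c"
  shows "h2 a b (c::'a) \<noteq> 0"
proof -
  obtain om :: 'a where om: "om^2 + om + 1 = 0" "om^q = om" using omega_exists by blast
  note o2 = om2_props[OF om]
  have "h2 a b c = Lf om a b c * Lf (om^2) a b c" by (rule om_h2[OF char2 om(1)])
  thus ?thesis using L_nz(1)[OF om assms] L_nz(1)[OF o2(1,2) assms] by simp
qed

lemma count2: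
  assumes u: "u1 \<in> U" "u2 \<in> U" "u3 \<in> U" "u1 \<noteq> u2" "u1 \<noteq> u3" "u2 \<noteq> u3"
  shows "card {u \<in> U - {u1,u2,u3}. s22 (u1^2) (u2^2) (u3^2) ((u::'a)^2) = 0} = 2"
proof -
  obtain om :: 'a where om: "om^2 + om + 1 = 0" "om^q = om" using omega_exists by blast
  note o2 = om2_props[OF om]
  define a where "a = u1^2"
  define b where "b = u2^2"
  define c where "c = u3^2"
  have abc: "a \<in> U" "b \<in> U" "c \<in> U" "a \<noteq> b" "a \<noteq> c" "b \<noteq> c"
    using u U_sq sq_inj unfolding a_def b_def c_def by auto
  define L1 where "L1 = Lf om a b c"
  define N1 where "N1 = Nf om a b c"
  define L2 where "L2 = Lf (om^2) a b c"
  define N2 where "N2 = Nf (om^2) a b c"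
  have L1: "L1 \<noteq> 0" unfolding L1_def by (rule L_nz(1)[OF om abc(1-3,6)])
  have L2: "L2 \<noteq> 0" unfolding L2_def by (rule L_nz(1)[OF o2(1,2) abc(1-3,6)])
  define x1 where "x1 = N1 / L1"
  define x2 where "x2 = N2 / L2"
  have x1U: "x1 \<in> U" unfolding x1_def N1_def L1_def by (rule root_U[OF om abc(1-3,6)])
  have x2U: "x2 \<in> U" unfolding x2_def N2_def L2_def by (rule root_U[OF o2(1,2) abc(1-3,6)])
  have fac: "s22 a b c y = (L1 * y + N1) * (L2 * y + N2)" for y
    unfolding L1_def N1_def L2_def N2_def by (rule om_s22[OF char2 om(1)])
  have lin: "L * y + N = 0 \<longleftrightarrow> y = N / L" if "L \<noteq> 0" for L N y :: 'a
  proof -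
    have "L * y + N = 0 \<longleftrightarrow> L * y = - N" by (simp add: eq_neg_iff_add_eq_0)
    also have "\<dots> \<longleftrightarrow> L * y = N" using neg_eq[of N] by (simp only:)
    also have "\<dots> \<longleftrightarrow> y = N / L" using that by (auto simp: field_simps)
    finally show ?thesis .
  qed
  have root_iff: "s22 a b c y = 0 \<longleftrightarrow> y = x1 \<or> y = x2" for y
    unfolding fac x1_def x2_def using lin[OF L1] lin[OF L2] by simp
  have x12: "x1 \<noteq> x2"
  proof
    assume "x1 = x2"
    hence "N1 * L2 - N2 * L1 = 0" using L1 L2 unfolding x1_def x2_def by (simp add: field_simps)
    moreover have "N1 * L2 - N2 * L1 = (a-b)*(b-c)*(c-a)"
      unfolding N1_def L2_def N2_def L1_def by (rule om_x12[OF char2 om(1)])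
    ultimately show False using abc by simp
  qed
  have xnot: "N / L \<noteq> a \<and> N / L \<noteq> b \<and> N / L \<noteq> c"
    if "t^2 + t + 1 = 0" "L = Lf t a b c" "N = Nf t a b c" "L \<noteq> 0" for t L N
  proof -
    have "t \<noteq> 0" using that(1) by auto
    have ea: "N - L * a = (a-b)*(a-c)" unfolding that(2,3) by (rule om_xa[OF char2 that(1)])
    have eb: "N - L * b = t*(b-a)*(b-c)" unfolding that(2,3) by (rule om_xb[OF char2 that(1)])
    have ec: "N - L * c = t^2*(c-a)*(c-b)" unfolding that(2,3) by (rule om_xc[OF char2 that(1)])
    have "N / L = z \<longleftrightarrow> N - L * z = 0" for z using that(4) by (auto simp: field_simps)
    thus ?thesis using ea eb ec abc \<open>t \<noteq> 0\<close> by auto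
  qed
  have x1n: "x1 \<noteq> a" "x1 \<noteq> b" "x1 \<noteq> c" using xnot[OF om(1) L1_def N1_def L1] unfolding x1_def by auto
  have x2n: "x2 \<noteq> a" "x2 \<noteq> b" "x2 \<noteq> c" using xnot[OF o2(1) L2_def N2_def L2] unfolding x2_def by auto
  obtain r1 where r1: "r1^2 = x1" using sq_surj by blast
  obtain r2 where r2: "r2^2 = x2" using sq_surj by blast
  have "{u \<in> U - {u1,u2,u3}. s22 (u1^2) (u2^2) (u3^2) (u^2) = 0} = {r1, r2}"
  proof (rule set_eqI)
    fix u :: 'a
    have e1: "u^2 = x1 \<longleftrightarrow> u = r1" using sq_inj[of u r1] r1 by simp
    have e2: "u^2 = x2 \<longleftrightarrow> u = r2" using sq_inj[of u r2] r2 by simp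
    have r1U: "r1 \<in> U" using x1U r1 U_sq by auto
    have r2U: "r2 \<in> U" using x2U r2 U_sq by auto
    have r1T: "r1 \<notin> {u1,u2,u3}" using x1n r1 unfolding a_def b_def c_def by auto
    have r2T: "r2 \<notin> {u1,u2,u3}" using x2n r2 unfolding a_def b_def c_def by auto
    show "u \<in> {u \<in> U - {u1,u2,u3}. s22 (u1^2) (u2^2) (u3^2) (u^2) = 0} \<longleftrightarrow> u \<in> {r1, r2}"
      using root_iff[of "u^2"] e1 e2 r1U r2U r1T r2T unfolding a_def b_def c_def by auto
  qed
  moreover have "r1 \<noteq> r2" using x12 r1 r2 by auto
  ultimately show ?thesis by simp
qed


lemma pow_eq2: "a + b = c + d \<Longrightarrow> (u::'a)^a * u^b = u^c * u^d"
  by (metis power_add)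

lemma U_exps:
  assumes "(u::'a) \<in> U"
  shows "u^(q-4) * u^2 = u^(q-2)" "u^(q-4) * (u^2)^4 = u^3" "u^(q-4) * (u^2)^5 = u^5"
    "u^(q-4) * u^5 = 1" "u^5 * u^(q-2) = u^2" "u^5 * u^3 = (u^2)^4" "u^5 * u^5 = (u^2)^5"
proof -
  have u1: "u^(q+1) = 1" using assms U_iff by simp
  have qq: "q \<ge> 16" by (rule q4)
  have p4: "(u^2)^4 = u^8" and p5: "(u^2)^5 = u^10" by (simp_all add: power_mult[symmetric])
  have "u^(q-4) * u^2 = u^(q-2) * u^0" by (rule pow_eq2) (use qq in simp)
  thus "u^(q-4) * u^2 = u^(q-2)" by simp
  have "u^(q-4) * u^8 = u^(q+1) * u^3" by (rule pow_eq2) (use qq in simp)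
  thus "u^(q-4) * (u^2)^4 = u^3" using u1 p4 by simp
  have "u^(q-4) * u^10 = u^(q+1) * u^5" by (rule pow_eq2) (use qq in simp)
  thus "u^(q-4) * (u^2)^5 = u^5" using u1 p5 by simp
  have "u^(q-4) * u^5 = u^(q+1) * u^0" by (rule pow_eq2) (use qq in simp)
  thus "u^(q-4) * u^5 = 1" using u1 by simp
  have "u^5 * u^(q-2) = u^(q+1) * u^2" by (rule pow_eq2) (use qq in simp)
  thus "u^5 * u^(q-2) = u^2" using u1 by simp
  have "u^5 * u^3 = u^8 * u^0" by (rule pow_eq2) simp
  thus "u^5 * u^3 = (u^2)^4" using p4 by simp
  have "u^5 * u^5 = u^10 * u^0" by (rule pow_eq2) simp
  thus "u^5 * u^5 = (u^2)^5" using p5 by simp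
qed

lemma U_conj_exps:
  assumes "(u::'a) \<in> U"
  shows "(u^3)^q = u^(q-2)" "(u^(q-2))^q = u^3" "(u^5)^q = u^(q-4)" "(u^(q-4))^q = u^5"
proof -
  have nz: "u \<noteq> 0" using assms U_nz by simp
  have uq: "u^q = inverse u" using assms U_conj by simp
  have a: "u^(q-2) = inverse u ^ 3"
  proof -
    have "u^(q-2) * u^3 = u^(q+1) * u^0" by (rule pow_eq2) (use q4 in simp)
    hence "u^(q-2) * u^3 = 1" using assms U_iff by simp
    thus ?thesis using nz by (simp add: field_simps power_inverse)
  qed
  have b: "u^(q-4) = inverse u ^ 5"
  proof -
    have "u^(q-4) * u^5 = 1" using U_exps[OF assms] by simp
    thus ?thesis using nz by (simp add: field_simps power_inverse)
  qed
  show "(u^3)^q = u^(q-2)" using a uq by (metis power_mult mult.commute)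
  show "(u^5)^q = u^(q-4)" using b uq by (metis power_mult mult.commute)
  show "(u^(q-2))^q = u^3" using a uq nz by (metis power_mult mult.commute inverse_inverse_eq power_inverse)
  show "(u^(q-4))^q = u^5" using b uq nz by (metis power_mult mult.commute inverse_inverse_eq power_inverse)
qed

lemma sum4:
  fixes c f :: "'a \<Rightarrow> 'a"
  assumes "u1 \<in> U" "u2 \<in> U" "u3 \<in> U" "u4 \<in> U" "distinct [u1,u2,u3,u4]"
    and "\<forall>u\<in>U. u \<notin> {u1,u2,u3,u4} \<longrightarrow> c u = 0"
  shows "(\<Sum>u\<in>U. c u * f u) = c u1 * f u1 + c u2 * f u2 + c u3 * f u3 + c (u4::'a) * f u4"
proof -
  have "(\<Sum>u\<in>U. c u * f u) = (\<Sum>u\<in>{u1,u2,u3,u4}. c u * f u)"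
    by (rule sum.mono_neutral_right) (use assms in auto)
  also have "\<dots> = c u1 * f u1 + c u2 * f u2 + c u3 * f u3 + c u4 * f u4"
    using assms(5) by (simp add: add.assoc)
  finally show ?thesis .
qed

lemma in_C35:
  "(\<lambda>u. if u \<in> U then a3 * u^3 + aq2 * u^(q-2) + a5 * u^5 + aq4 * u^(q-4) else 0) \<in> (code_C35 q :: ('a \<Rightarrow> 'a) set)"
  unfolding code_C35_def by auto

lemma dual_char:
  assumes "is_vector q (c::'a \<Rightarrow> 'a)"
  shows "c \<in> dual_code q (code_C35 q) \<longleftrightarrow>
    (\<Sum>u\<in>U. c u * u^3) = 0 \<and> (\<Sum>u\<in>U. c u * u^(q-2)) = 0 \<and>
    (\<Sum>u\<in>U. c u * u^5) = 0 \<and> (\<Sum>u\<in>U. c u * u^(q-4)) = 0"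
proof
  assume h: "c \<in> dual_code q (code_C35 q)"
  have orth: "(\<Sum>u\<in>U. c u * (if u \<in> U then a3 * u^3 + aq2 * u^(q-2) + a5 * u^5 + aq4 * u^(q-4) else 0)) = 0" for a3 aq2 a5 aq4
    using h in_C35[of a3 aq2 a5 aq4] unfolding dual_code_def by auto
  have ev: "(\<Sum>u\<in>U. c u * (if u \<in> U then a3 * u^3 + aq2 * u^(q-2) + a5 * u^5 + aq4 * u^(q-4) else 0))
     = (\<Sum>u\<in>U. c u * (a3 * u^3 + aq2 * u^(q-2) + a5 * u^5 + aq4 * u^(q-4)))" for a3 aq2 a5 aq4
    by (rule sum.cong) auto
  show "(\<Sum>u\<in>U. c u * u^3) = 0 \<and> (\<Sum>u\<in>U. c u * u^(q-2)) = 0 \<and>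
    (\<Sum>u\<in>U. c u * u^5) = 0 \<and> (\<Sum>u\<in>U. c u * u^(q-4)) = 0"
    using orth[of 1 0 0 0] orth[of 0 1 0 0] orth[of 0 0 1 0] orth[of 0 0 0 1] ev[of 1 0 0 0] ev[of 0 1 0 0] ev[of 0 0 1 0] ev[of 0 0 0 1]
    by simp
next
  assume h: "(\<Sum>u\<in>U. c u * u^3) = 0 \<and> (\<Sum>u\<in>U. c u * u^(q-2)) = 0 \<and>
    (\<Sum>u\<in>U. c u * u^5) = 0 \<and> (\<Sum>u\<in>U. c u * u^(q-4)) = 0"
  show "c \<in> dual_code q (code_C35 q)"
    unfolding dual_code_def
  proof (intro CollectI conjI ballI assms)
    fix x assume "x \<in> (code_C35 q :: ('a \<Rightarrow> 'a) set)"
    then obtain a3 aq2 a5 aq4 where x: "\<And>u. x u = (if u \<in> U then a3 * u^3 + aq2 * u^(q-2) + a5 * u^5 + aq4 * u^(q-4) else 0)"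
      unfolding code_C35_def by auto
    have "(\<Sum>u\<in>U. c u * x u) = (\<Sum>u\<in>U. a3 * (c u * u^3) + aq2 * (c u * u^(q-2)) + a5 * (c u * u^5) + aq4 * (c u * u^(q-4)))"
      by (rule sum.cong) (auto simp: x algebra_simps)
    also have "\<dots> = a3 * (\<Sum>u\<in>U. c u * u^3) + aq2 * (\<Sum>u\<in>U. c u * u^(q-2)) + a5 * (\<Sum>u\<in>U. c u * u^5) + aq4 * (\<Sum>u\<in>U. c u * u^(q-4))"
      by (simp add: sum.distrib sum_distrib_left)
    also have "\<dots> = 0" using h by simp
    finally show "(\<Sum>u\<in>U. c u * x u) = 0" .
  qed
qed


lemma frob4: "((a1::'a)*b1 + a2*b2 + a3*b3 + a4*b4)^q = a1^q*b1^q + a2^q*b2^q + a3^q*b3^q + a4^q*b4^q"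
  by (simp add: frob_add power_mult_distrib)

lemma conj_sum:
  assumes "(u1^k)^q = (u1::'a)^k'" "(u2^k)^q = u2^k'" "(u3^k)^q = u3^k'" "(u4^k)^q = u4^k'"
    and "c1*u1^k + c2*u2^k + c3*u3^k + c4*u4^k = 0"
  shows "c1^q*u1^k' + c2^q*u2^k' + c3^q*u3^k' + c4^q*u4^k' = 0"
proof -
  have "(c1*u1^k + c2*u2^k + c3*u3^k + c4*u4^k)^q = 0" using assms(5) q4 by simp
  thus ?thesis unfolding frob4 assms(1-4) .
qed

lemma V3_nz: "a \<noteq> b \<Longrightarrow> a \<noteq> c \<Longrightarrow> b \<noteq> c \<Longrightarrow> V3 a b (c::'a) \<noteq> 0"
  unfolding V3_def by simp

lemma V4_nz: "distinct [a,b,c,x] \<Longrightarrow> V4 a b c (x::'a) \<noteq> 0"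
  unfolding V4_def by auto

lemma fwd:
  assumes c: "c \<in> dual_code q (code_C35 q)" and supp: "supp_vec q c = {u1,u2,u3,u4}"
    and U: "u1 \<in> U" "u2 \<in> U" "u3 \<in> U" "u4 \<in> U" and dist: "distinct [u1,u2,u3,(u4::'a)]"
  shows "s22 (u1^2) (u2^2) (u3^2) (u4^2) = 0"
proof -
  have iv: "is_vector q c" using c unfolding dual_code_def by auto
  have out: "\<forall>u\<in>U. u \<notin> {u1,u2,u3,u4} \<longrightarrow> c u = 0" using supp unfolding supp_vec_def by auto
  have nz4: "c u4 \<noteq> 0" using supp unfolding supp_vec_def by auto
  note S = c[unfolded dual_char[OF iv]]
  note s4 = sum4[OF U dist out]
  have S3: "c u1 * u1^3 + c u2 * u2^3 + c u3 * u3^3 + c u4 * u4^3 = 0" using S s4 by simp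
  have Sq2: "c u1 * u1^(q-2) + c u2 * u2^(q-2) + c u3 * u3^(q-2) + c u4 * u4^(q-2) = 0" using S s4 by simp
  have S5: "c u1 * u1^5 + c u2 * u2^5 + c u3 * u3^5 + c u4 * u4^5 = 0" using S s4 by simp
  have Sq4: "c u1 * u1^(q-4) + c u2 * u2^(q-4) + c u3 * u3^(q-4) + c u4 * u4^(q-4) = 0" using S s4 by simp
  define d1 where "d1 = c u1 * u1^(q-4)"
  define d2 where "d2 = c u2 * u2^(q-4)"
  define d3 where "d3 = c u3 * u3^(q-4)"
  define d4 where "d4 = c u4 * u4^(q-4)"
  note X1 = U_exps[OF U(1)] and X2 = U_exps[OF U(2)] and X3 = U_exps[OF U(3)] and X4 = U_exps[OF U(4)]
  have E0: "d1 + d2 + d3 + d4 = 0" using Sq4 unfolding d1_def d2_def d3_def d4_def .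
  have E1: "d1 * u1^2 + d2 * u2^2 + d3 * u3^2 + d4 * u4^2 = 0"
    using Sq2 unfolding d1_def d2_def d3_def d4_def by (simp add: mult.assoc X1 X2 X3 X4)
  have E4: "d1 * (u1^2)^4 + d2 * (u2^2)^4 + d3 * (u3^2)^4 + d4 * (u4^2)^4 = 0"
    using S3 unfolding d1_def d2_def d3_def d4_def by (simp only: mult.assoc X1 X2 X3 X4)
  have E5: "d1 * (u1^2)^5 + d2 * (u2^2)^5 + d3 * (u3^2)^5 + d4 * (u4^2)^5 = 0"
    using S5 unfolding d1_def d2_def d3_def d4_def by (simp only: mult.assoc X1 X2 X3 X4)
  have "d4 * (V4 (u1^2) (u2^2) (u3^2) (u4^2) * s22 (u1^2) (u2^2) (u3^2) (u4^2)) = 0"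
    by (rule elim4[OF E0 E1 E4 E5])
  moreover have "d4 \<noteq> 0" unfolding d4_def using nz4 U_nz[OF U(4)] by simp
  moreover have "V4 (u1^2) (u2^2) (u3^2) (u4^2) \<noteq> 0" using dist sq_inj by (intro V4_nz) auto
  ultimately show ?thesis by simp
qed


lemma uniq3:
  assumes U: "a \<in> U" "b \<in> U" "c \<in> U" and dist: "a \<noteq> b" "a \<noteq> c" "b \<noteq> c"
    and E: "ea + eb + ec = 0" "ea*a + eb*b + ec*c = 0" "ea*a^4 + eb*b^4 + ec*c^4 = (0::'a)"
  shows "ea = 0"
proof -
  have "ea * (V3 a b c * h2 a b c) = 0" by (rule elim3[OF E])
  moreover have "V3 a b c \<noteq> 0" using dist by (rule V3_nz)
  moreover have "h2 a b c \<noteq> 0" using U dist(3) by (rule h2_nz)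
  ultimately show ?thesis by simp
qed

lemma bwd:
  assumes U: "u1 \<in> U" "u2 \<in> U" "u3 \<in> U" "u4 \<in> U" and dist: "distinct [u1,u2,u3,(u4::'a)]"
    and s: "s22 (u1^2) (u2^2) (u3^2) (u4^2) = 0"
  shows "\<exists>cv. cv \<in> subfield_subcode q (dual_code q (code_C35 q)) \<and> supp_vec q cv = {u1,u2,u3,u4}"
proof -
  define w1 where "w1 = u1^2"
  define w2 where "w2 = u2^2"
  define w3 where "w3 = u3^2"
  define w4 where "w4 = u4^2"
  have wU: "w1 \<in> U" "w2 \<in> U" "w3 \<in> U" "w4 \<in> U" using U U_sq unfolding w1_def w2_def w3_def w4_def by auto
  have wd: "w1 \<noteq> w2" "w1 \<noteq> w3" "w1 \<noteq> w4" "w2 \<noteq> w3" "w2 \<noteq> w4" "w3 \<noteq> w4"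
    using dist sq_inj unfolding w1_def w2_def w3_def w4_def by auto
  define D1 where "D1 = V3 w2 w3 w4 * h2 w2 w3 w4"
  define D2 where "D2 = - (V3 w1 w3 w4 * h2 w1 w3 w4)"
  define D3 where "D3 = V3 w1 w2 w4 * h2 w1 w2 w4"
  define D4 where "D4 = - (V3 w1 w2 w3 * h2 w1 w2 w3)"
  note cv0 = cofvec[where a=w1 and b=w2 and c=w3 and x=w4]
  have E0: "D1 + D2 + D3 + D4 = 0" unfolding D1_def D2_def D3_def D4_def by (rule cv0(1))
  have E1: "D1*w1 + D2*w2 + D3*w3 + D4*w4 = 0" unfolding D1_def D2_def D3_def D4_def by (rule cv0(2))
  have E4: "D1*w1^4 + D2*w2^4 + D3*w3^4 + D4*w4^4 = 0" unfolding D1_def D2_def D3_def D4_def by (rule cv0(3))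
  have E5: "D1*w1^5 + D2*w2^5 + D3*w3^5 + D4*w4^5 = 0"
    unfolding D1_def D2_def D3_def D4_def cv0(4) using s unfolding w1_def w2_def w3_def w4_def by simp
  have Dnz: "D1 \<noteq> 0" "D2 \<noteq> 0" "D3 \<noteq> 0" "D4 \<noteq> 0"
    unfolding D1_def D2_def D3_def D4_def using wd wU
    by (auto simp: V3_nz h2_nz)
  define g1 where "g1 = D1 * u1^5"
  define g2 where "g2 = D2 * u2^5"
  define g3 where "g3 = D3 * u3^5"
  define g4 where "g4 = D4 * u4^5"
  have gnz: "g1 \<noteq> 0" "g2 \<noteq> 0" "g3 \<noteq> 0" "g4 \<noteq> 0"
    unfolding g1_def g2_def g3_def g4_def using Dnz U U_nz by auto
  note X1 = U_exps[OF U(1)] and X2 = U_exps[OF U(2)] and X3 = U_exps[OF U(3)] and X4 = U_exps[OF U(4)]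
  have G1: "g1 * u1^(q-4) = D1" "g2 * u2^(q-4) = D2" "g3 * u3^(q-4) = D3" "g4 * u4^(q-4) = D4"
    unfolding g1_def g2_def g3_def g4_def using X1(4) X2(4) X3(4) X4(4)
    by (simp_all add: mult.assoc mult.commute[of "_^5"])
  have G2: "g1 * u1^(q-2) = D1*w1" "g2 * u2^(q-2) = D2*w2" "g3 * u3^(q-2) = D3*w3" "g4 * u4^(q-2) = D4*w4"
    unfolding g1_def g2_def g3_def g4_def w1_def w2_def w3_def w4_def using X1(5) X2(5) X3(5) X4(5)
    by (simp_all add: mult.assoc)
  have G3: "g1 * u1^3 = D1*w1^4" "g2 * u2^3 = D2*w2^4" "g3 * u3^3 = D3*w3^4" "g4 * u4^3 = D4*w4^4"
    unfolding g1_def g2_def g3_def g4_def w1_def w2_def w3_def w4_def using X1(6) X2(6) X3(6) X4(6)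
    by (simp_all add: mult.assoc)
  have G5: "g1 * u1^5 = D1*w1^5" "g2 * u2^5 = D2*w2^5" "g3 * u3^5 = D3*w3^5" "g4 * u4^5 = D4*w4^5"
    unfolding g1_def g2_def g3_def g4_def w1_def w2_def w3_def w4_def using X1(7) X2(7) X3(7) X4(7)
    by (simp_all add: mult.assoc)
  define c1 where "c1 = g1 / g1"
  define c2 where "c2 = g2 / g1"
  define c3 where "c3 = g3 / g1"
  define c4 where "c4 = g4 / g1"
  have c1: "c1 = 1" unfolding c1_def using gnz by simp
  have cnz: "c1 \<noteq> 0" "c2 \<noteq> 0" "c3 \<noteq> 0" "c4 \<noteq> 0" unfolding c1_def c2_def c3_def c4_def using gnz by auto
  have scale: "c1*u1^k + c2*u2^k + c3*u3^k + c4*u4^k = (g1*u1^k + g2*u2^k + g3*u3^k + g4*u4^k) / g1" for k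
    unfolding c1_def c2_def c3_def c4_def by (simp add: field_simps)
  have Cq4: "c1*u1^(q-4) + c2*u2^(q-4) + c3*u3^(q-4) + c4*u4^(q-4) = 0"
    unfolding scale G1 E0 by simp
  have Cq2: "c1*u1^(q-2) + c2*u2^(q-2) + c3*u3^(q-2) + c4*u4^(q-2) = 0"
    unfolding scale G2 E1 by simp
  have C3: "c1*u1^3 + c2*u2^3 + c3*u3^3 + c4*u4^3 = 0"
    unfolding scale G3 E4 by simp
  have C5: "c1*u1^5 + c2*u2^5 + c3*u3^5 + c4*u4^5 = 0"
    unfolding scale G5 E5 by simp
  note Y1 = U_conj_exps[OF U(1)] and Y2 = U_conj_exps[OF U(2)] and Y3 = U_conj_exps[OF U(3)] and Y4 = U_conj_exps[OF U(4)]
  have Kq4: "c1^q*u1^(q-4) + c2^q*u2^(q-4) + c3^q*u3^(q-4) + c4^q*u4^(q-4) = 0"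
    by (rule conj_sum[OF Y1(3) Y2(3) Y3(3) Y4(3) C5])
  have Kq2: "c1^q*u1^(q-2) + c2^q*u2^(q-2) + c3^q*u3^(q-2) + c4^q*u4^(q-2) = 0"
    by (rule conj_sum[OF Y1(1) Y2(1) Y3(1) Y4(1) C3])
  have K3: "c1^q*u1^3 + c2^q*u2^3 + c3^q*u3^3 + c4^q*u4^3 = 0"
    by (rule conj_sum[OF Y1(2) Y2(2) Y3(2) Y4(2) Cq2])
  define e2 where "e2 = (c2^q - c2) * u2^(q-4)"
  define e3 where "e3 = (c3^q - c3) * u3^(q-4)"
  define e4 where "e4 = (c4^q - c4) * u4^(q-4)"
  have c1q: "c1^q = c1" using c1 by simp
  have F0: "e2 + e3 + e4 = 0"
  proof -
    have "e2 + e3 + e4 = (c1^q*u1^(q-4) + c2^q*u2^(q-4) + c3^q*u3^(q-4) + c4^q*u4^(q-4))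
       - (c1*u1^(q-4) + c2*u2^(q-4) + c3*u3^(q-4) + c4*u4^(q-4))"
      unfolding e2_def e3_def e4_def c1q by (simp add: algebra_simps)
    thus ?thesis using Kq4 Cq4 by simp
  qed
  have F1: "e2*w2 + e3*w3 + e4*w4 = 0"
  proof -
    have "e2*w2 + e3*w3 + e4*w4 = (c1^q*u1^(q-2) + c2^q*u2^(q-2) + c3^q*u3^(q-2) + c4^q*u4^(q-2))
       - (c1*u1^(q-2) + c2*u2^(q-2) + c3*u3^(q-2) + c4*u4^(q-2))"
      unfolding e2_def e3_def e4_def c1q w2_def w3_def w4_def
      using X2(1) X3(1) X4(1) by (simp add: algebra_simps)
    thus ?thesis using Kq2 Cq2 by simp
  qed
  have F4: "e2*w2^4 + e3*w3^4 + e4*w4^4 = 0"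
  proof -
    have "e2*w2^4 + e3*w3^4 + e4*w4^4 = (c1^q*u1^3 + c2^q*u2^3 + c3^q*u3^3 + c4^q*u4^3)
       - (c1*u1^3 + c2*u2^3 + c3*u3^3 + c4*u4^3)"
      unfolding e2_def e3_def e4_def c1q w2_def w3_def w4_def
      using X2(2) X3(2) X4(2) by (simp add: algebra_simps)
    thus ?thesis using K3 C3 by simp
  qed
  have "e2 = 0" by (rule uniq3[OF wU(2,3,4) wd(4,5,6) F0 F1 F4])
  moreover have "e3 = 0"
    by (rule uniq3[where ea=e3 and eb=e2 and ec=e4, OF wU(3,2,4) wd(4)[symmetric] wd(6,5)]) (use F0 F1 F4 in \<open>simp_all add: ac_simps\<close>)
  moreover have "e4 = 0"
    by (rule uniq3[where ea=e4 and eb=e2 and ec=e3, OF wU(4,2,3) wd(5)[symmetric] wd(6)[symmetric] wd(4)]) (use F0 F1 F4 in \<open>simp_all add: ac_simps\<close>)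
  ultimately have cq: "c2^q = c2" "c3^q = c3" "c4^q = c4"
    unfolding e2_def e3_def e4_def using U_nz U by auto
  define cv where "cv = (\<lambda>u. if u = u1 then c1 else if u = u2 then c2 else if u = u3 then c3 else if u = u4 then c4 else 0)"
  have dd: "u1 \<noteq> u2" "u1 \<noteq> u3" "u1 \<noteq> u4" "u2 \<noteq> u3" "u2 \<noteq> u4" "u3 \<noteq> u4"
    "u2 \<noteq> u1" "u3 \<noteq> u1" "u4 \<noteq> u1" "u3 \<noteq> u2" "u4 \<noteq> u2" "u4 \<noteq> u3" using dist by auto
  have cvv: "cv u1 = c1" "cv u2 = c2" "cv u3 = c3" "cv u4 = c4" unfolding cv_def using dd by auto
  have iv: "is_vector q cv" unfolding is_vector_def cv_def using U by auto
  have out: "\<forall>u\<in>U. u \<notin> {u1,u2,u3,u4} \<longrightarrow> cv u = 0" unfolding cv_def by auto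
  note s4 = sum4[OF U dist out]
  have "cv \<in> dual_code q (code_C35 q)"
    unfolding dual_char[OF iv] s4 cvv using Cq4 Cq2 C3 C5 by simp
  moreover have "\<forall>u\<in>U. cv u ^ q = cv u" unfolding cv_def using cq c1q q4 by auto
  moreover have "supp_vec q cv = {u1,u2,u3,u4}"
    unfolding supp_vec_def using cvv cnz U out by auto
  ultimately show ?thesis unfolding subfield_subcode_def by blast
qed


lemma blocks_T:
  assumes U: "u1 \<in> U" "u2 \<in> U" "u3 \<in> U" and d: "u1 \<noteq> u2" "u1 \<noteq> u3" "u2 \<noteq> u3"
  shows "{b \<in> blocks_w q 4 (subfield_subcode q (dual_code q (code_C35 q :: ('a \<Rightarrow> 'a) set))). {u1,u2,u3} \<subseteq> b}
    = (\<lambda>u. insert u {u1,u2,u3}) ` {u \<in> U - {u1,u2,u3}. s22 (u1^2) (u2^2) (u3^2) ((u::'a)^2) = 0}"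
proof (rule set_eqI)
  fix b :: "'a set"
  show "b \<in> {b \<in> blocks_w q 4 (subfield_subcode q (dual_code q (code_C35 q :: ('a \<Rightarrow> 'a) set))). {u1,u2,u3} \<subseteq> b}
    \<longleftrightarrow> b \<in> (\<lambda>u. insert u {u1,u2,u3}) ` {u \<in> U - {u1,u2,u3}. s22 (u1^2) (u2^2) (u3^2) (u^2) = 0}"
  proof
    assume "b \<in> {b \<in> blocks_w q 4 (subfield_subcode q (dual_code q (code_C35 q :: ('a \<Rightarrow> 'a) set))). {u1,u2,u3} \<subseteq> b}"
    then obtain c where c: "c \<in> subfield_subcode q (dual_code q (code_C35 q))" "b = supp_vec q c"
      "card b = 4" "{u1,u2,u3} \<subseteq> b"
      unfolding blocks_w_def by auto
    have bU: "b \<subseteq> U" using c(2) unfolding supp_vec_def by auto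
    have fin: "finite b" using c(3) card.infinite by fastforce
    have "card (b - {u1,u2,u3}) = card b - card {u1,u2,u3}" using c(4) fin by (simp add: card_Diff_subset)
    hence "card (b - {u1,u2,u3}) = 1" using c(3) d by simp
    then obtain u4 where u4: "b - {u1,u2,u3} = {u4}" by (rule card_1_singletonE)
    have bi: "b = {u1,u2,u3,u4}" using u4 c(4) by auto
    have u4U: "u4 \<in> U" using bU bi by auto
    have u4T: "u4 \<notin> {u1,u2,u3}" using u4 by auto
    have cd: "c \<in> dual_code q (code_C35 q)" using c(1) unfolding subfield_subcode_def by auto
    have "s22 (u1^2) (u2^2) (u3^2) (u4^2) = 0"
      by (rule fwd[OF cd c(2)[symmetric, unfolded bi] U u4U]) (use d u4T in auto)
    moreover have "b = insert u4 {u1,u2,u3}" using bi by auto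
    ultimately show "b \<in> (\<lambda>u. insert u {u1,u2,u3}) ` {u \<in> U - {u1,u2,u3}. s22 (u1^2) (u2^2) (u3^2) (u^2) = 0}"
      using u4U u4T by auto
  next
    assume "b \<in> (\<lambda>u. insert u {u1,u2,u3}) ` {u \<in> U - {u1,u2,u3}. s22 (u1^2) (u2^2) (u3^2) (u^2) = 0}"
    then obtain u4 where u4: "u4 \<in> U" "u4 \<notin> {u1,u2,u3}" "s22 (u1^2) (u2^2) (u3^2) (u4^2) = 0"
      "b = insert u4 {u1,u2,u3}" by auto
    have dist: "distinct [u1,u2,u3,u4]" using d u4(2) by auto
    obtain cv where cv: "cv \<in> subfield_subcode q (dual_code q (code_C35 q))" "supp_vec q cv = {u1,u2,u3,u4}"
      using bwd[OF U u4(1) dist u4(3)] by blast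
    have "card {u1,u2,u3,u4} = 4" using dist by simp
    moreover have "b = {u1,u2,u3,u4}" using u4(4) by auto
    ultimately show "b \<in> {b \<in> blocks_w q 4 (subfield_subcode q (dual_code q (code_C35 q :: ('a \<Rightarrow> 'a) set))). {u1,u2,u3} \<subseteq> b}"
      unfolding blocks_w_def using cv by auto
  qed
qed

lemma design_main:
  "is_design 3 (q + 1) 4 2 (roots_unity q :: 'a set)
     (blocks_w q 4 (subfield_subcode q (dual_code q (code_C35 q :: ('a \<Rightarrow> 'a) set))))"
  unfolding is_design_def
proof (intro conjI allI impI ballI)
  show "finite U" by simp
  show "card U = q + 1" by (rule U_card)
next
  fix b assume "b \<in> blocks_w q 4 (subfield_subcode q (dual_code q (code_C35 q :: ('a \<Rightarrow> 'a) set)))"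
  thus "b \<subseteq> U" "card b = 4" unfolding blocks_w_def supp_vec_def by auto
next
  fix T :: "'a set" assume T: "T \<subseteq> U" "card T = 3"
  then obtain u1 u2 u3 where t: "T = {u1,u2,u3}" "u1 \<noteq> u2" "u2 \<noteq> u3" "u1 \<noteq> u3"
    by (auto simp: card_3_iff)
  have U: "u1 \<in> U" "u2 \<in> U" "u3 \<in> U" using T t by auto
  have inj: "inj_on (\<lambda>u. insert u {u1,u2,u3}) (U - {u1,u2,u3})"
    by (rule inj_onI) auto
  have "card {b \<in> blocks_w q 4 (subfield_subcode q (dual_code q (code_C35 q :: ('a \<Rightarrow> 'a) set))). T \<subseteq> b}
     = card ((\<lambda>u. insert u {u1,u2,u3}) ` {u \<in> U - {u1,u2,u3}. s22 (u1^2) (u2^2) (u3^2) (u^2) = 0})"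
    unfolding t(1) using blocks_T[OF U t(2,4,3)] by simp
  also have "\<dots> = card {u \<in> U - {u1,u2,u3}. s22 (u1^2) (u2^2) (u3^2) (u^2) = 0}"
    by (rule card_image) (rule inj_on_subset[OF inj], auto)
  also have "\<dots> = 2" by (rule count2[OF U t(2,4,3)])
  finally show "card {b \<in> blocks_w q 4 (subfield_subcode q (dual_code q (code_C35 q :: ('a \<Rightarrow> 'a) set))). T \<subseteq> b} = 2" .
qed

end

theorem theorem27:
  fixes m q :: nat
  assumes "m \<ge> 4" and "even m" and "q = 2 ^ m"
    and "card (UNIV :: 'a set) = q ^ 2"
  shows "is_design 3 (q + 1) 4 2 (roots_unity q :: ('a::{field,finite}) set)
           (blocks_w q 4 (subfield_subcode q (dual_code q (code_C35 q :: ('a \<Rightarrow> 'a) set))))"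
  by (rule design_main[OF assms])

end
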